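(* Let $(z_n)_{n=0}^{n_f}$ be the Markov chain on $\mathbb{R}^d$ with $z_0\sim q_\phi(z_0\mid x)$ and $$z_n=\mu_{n-1}+\sigma_{n-1}U_{n-1},\quad \mu_{n-1}=z_{n-1}+f(z_{n-1},t_{n-1})\Delta t_{n-1},\quad \sigma_{n-1}=g(t_{n-1})\sqrt{\Delta t_{n-1}}>0,\quad 1\le n\le n_f,$$ with $U_0,\dots,U_{n_f-1}$ i.i.d. $\mathcal{N}(0,I_d)$ independent of $z_0$ (so the transitions are exactly Gaussian, $q_\phi(z_n\mid z_{n-1})=\mathcal{N}(\mu_{n-1},\sigma_{n-1}^2I_d)$). Let $q_\phi(z_n)$ denote the marginal density of $z_n$, let $s_\theta:\mathbb{R}^d\times[0,T]\to\mathbb{R}^d$ be a score network, and let $N$ be uniformly distributed on $\{1,\dots,n_f\}$, independent of $z_0$ and the $U_n$'s. Assume all expectations below are finite and that differentiation under the integral sign in $q_\phi(z_n)=\int q_\phi(z_n\mid z_{n-1})q_\phi(z_{n-1})dz_{n-1}$ is permitted. Define the Euler–Maruyama discretized cross entropy $$\widehat{\mathrm{CE}}:=H(q_\phi(z_{n_f}))+\tfrac12\mathbb{E}_{N,z_N}\big[g^2(t_N)\|\nabla_{z_N}\log q_\phi(z_N)-s_\theta(z_N,t_N)\|_2^2\big]+\tfrac12\mathbb{E}_{N,z_N}\big[(2f(z_N,t_N)-g^2(t_N)\nabla_{z_N}\log q_\phi(z_N))^{\top}\nabla_{z_N}\log q_\phi(z_N)\big],$$ which the paper uses as the approximation $\mathrm{CE}(q_\phi(z_0\mid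 x)\|p_\theta(z_0))\approx\widehat{\mathrm{CE}}$. Then $$\widehat{\mathrm{CE}} = H(q_\phi(z_{n_f}))+\tfrac12\mathbb{E}_{N,z_N}\big[g^2(t_N)\|s_\theta(z_N,t_N)\|_2^2\big]+\mathbb{E}_{N,z_{N-1},z_N}\Big[g^2(t_N)\frac{U_{N-1}}{\sigma_{N-1}}\cdot\big(s_\theta(z_N,t_N)-s_\theta(\mu_{N-1},t_N)\big)\Big]-\mathbb{E}_{N,z_{N-1},z_N}\Big[\frac{U_{N-1}}{\sigma_{N-1}}\cdot\big(f(z_N,t_N)-f(\mu_{N-1},t_N)\big)\Big].$$
   Context: Setting: a VAE with encoder density $q_\phi(z_0\mid x)$ on the latent space $\mathbb{R}^d$ (for a fixed data point $x$) and a latent prior $p_\theta(z_0)$ learned by a score-based model whose score network $s_\theta(z,t)$ approximates $\nabla_z\log$ of the time-$t$ marginal. The latent forward diffusion is $dz_t=f(z_t,t)dt+g(t)dw_t$ on $[0,T]$ with possibly nonlinear drift $f:\mathbb{R}^d\times[0,T]\to\mathbb{R}^d$ and diffusion coefficient $g:[0,T]\to\mathbb{R}$; $0=t_0<\dots<t_{n_f}=T$, $\Delta t_{n-1}=t_n-t_{n-1}$. $H(q)=-\int q\log q$ is the differential entropy and $\mathrm{CE}(q\|p)=-\int q\log p$ the cross entropy. *)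

theory Defs
  imports "HOL-Analysis.Analysis"
begin

text \<open>Euler--Maruyama discretisation of the latent forward SDE, in density form.
  The latent space R^d is an arbitrary Euclidean space 'a (d = DIM('a)).\<close>

definition gauss :: "real \<Rightarrow> 'a::euclidean_space \<Rightarrow> real" where
  "gauss s w = (1 / (sqrt (2 * pi) * s)) ^ DIM('a) * exp (- (norm w)\<^sup>2 / (2 * s\<^sup>2))"

definition em_mu :: "('a::euclidean_space \<Rightarrow> real \<Rightarrow> 'a) \<Rightarrow> (nat \<Rightarrow> real) \<Rightarrow> nat \<Rightarrow> 'a \<Rightarrow> 'a" where
  "em_mu f t n y = y + (t (Suc n) - t n) *\<^sub>R f y (t n)"

definition em_sigma :: "(real \<Rightarrow> real) \<Rightarrow> (nat \<Rightarrow> real) \<Rightarrow> nat \<Rightarrow> real" where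
  "em_sigma g t n = g (t n) * sqrt (t (Suc n) - t n)"

primrec marg :: "('a::euclidean_space \<Rightarrow> real) \<Rightarrow> ('a \<Rightarrow> real \<Rightarrow> 'a) \<Rightarrow> (real \<Rightarrow> real)
    \<Rightarrow> (nat \<Rightarrow> real) \<Rightarrow> nat \<Rightarrow> 'a \<Rightarrow> real" where
  "marg q0 f g t 0 = q0"
| "marg q0 f g t (Suc n) = (\<lambda>z. \<integral>y. gauss (em_sigma g t n) (z - em_mu f t n y) * marg q0 f g t n y \<partial>lborel)"

definition entropy :: "('a::euclidean_space \<Rightarrow> real) \<Rightarrow> real" where
  "entropy q = - (\<integral>z. q z * ln (q z) \<partial>lborel)"

definition EN :: "nat \<Rightarrow> (nat \<Rightarrow> 'a::euclidean_space \<Rightarrow> real) \<Rightarrow> (nat \<Rightarrow> 'a \<Rightarrow> real) \<Rightarrow> real" where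
  "EN nf q h = (\<Sum>n = 1..nf. \<integral>z. q n z * h n z \<partial>lborel) / real nf"

text \<open>E_{N,z_{N-1},z_N}[h(N, z_{N-1}, U_{N-1}, z_N)], where z_{N-1} ~ q_{N-1},
  U_{N-1} ~ N(0,I) independent, and z_N = mu_{N-1}(z_{N-1}) + sigma_{N-1} U_{N-1}.
  The arguments of h are (n, y = z_{n-1}, u = U_{n-1}, z = z_n).\<close>
definition EJ :: "nat \<Rightarrow> (nat \<Rightarrow> 'a::euclidean_space \<Rightarrow> real) \<Rightarrow> (nat \<Rightarrow> 'a \<Rightarrow> 'a) \<Rightarrow> (nat \<Rightarrow> real)
    \<Rightarrow> (nat \<Rightarrow> 'a \<Rightarrow> 'a \<Rightarrow> 'a \<Rightarrow> real) \<Rightarrow> real" where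
  "EJ nf q mu sig h = (\<Sum>n = 1..nf.
      \<integral>yu. q (n - 1) (fst yu) * gauss 1 (snd yu)
             * h n (fst yu) (snd yu) (mu (n - 1) (fst yu) + sig (n - 1) *\<^sub>R snd yu)
        \<partial>(lborel \<Otimes>\<^sub>M lborel)) / real nf"

end

theory Submission imports Defs begin


lemma nn_integral_affine_eucl:
  fixes f :: "'a::euclidean_space \<Rightarrow> ennreal"
  assumes [measurable]: "f \<in> borel_measurable borel" and c: "c \<noteq> 0"
  shows "(\<integral>\<^sup>+x. f x \<partial>lborel) = ennreal (\<bar>c\<bar>^DIM('a)) * (\<integral>\<^sup>+x. f (t + c *\<^sub>R x) \<partial>lborel)"
  by (subst lborel_affine[OF c, of t])
     (simp add: nn_integral_density nn_integral_distr nn_integral_cmult)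

lemma integrable_affine_eucl:
  fixes f :: "'a::euclidean_space \<Rightarrow> 'b :: {banach, second_countable_topology}"
  assumes f: "integrable lborel f"
  shows "c \<noteq> 0 \<Longrightarrow> integrable lborel (\<lambda>x. f (t + c *\<^sub>R x))"
  using f f[THEN borel_measurable_integrable] unfolding integrable_iff_bounded
  by (subst (asm) nn_integral_affine_eucl[where c=c and t=t]) (auto simp: ennreal_mult_less_top)

lemma integrable_affine_eucl_iff:
  fixes f :: "'a::euclidean_space \<Rightarrow> 'b :: {banach, second_countable_topology}"
  shows "c \<noteq> 0 \<Longrightarrow> integrable lborel (\<lambda>x. f (t + c *\<^sub>R x)) \<longleftrightarrow> integrable lborel f"
  using
    integrable_affine_eucl[of f c t]
    integrable_affine_eucl[of "\<lambda>x. f (t + c *\<^sub>R x)" "1/c" "-(1/c) *\<^sub>R t"]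
  by (auto simp add: algebra_simps)

lemma integral_affine_eucl:
  fixes f :: "'a::euclidean_space \<Rightarrow> 'b :: {banach, second_countable_topology}"
  assumes c: "c \<noteq> 0" shows "(\<integral>x. f x \<partial> lborel) = (\<bar>c\<bar>^DIM('a)) *\<^sub>R (\<integral>x. f (t + c *\<^sub>R x) \<partial>lborel)"
proof cases
  assume f[measurable]: "integrable lborel f" then show ?thesis
    using c f f[THEN borel_measurable_integrable] f[THEN integrable_affine_eucl, of c t]
    by (subst lborel_affine[OF c, of t])
       (simp add: integral_density integral_distr)
next
  assume "\<not> integrable lborel f" with c show ?thesis
    by (simp add: integrable_affine_eucl_iff not_integrable_integral_eq)
qed

lemma gauss_meas[measurable]: "gauss s \<in> borel_measurable borel"
  unfolding gauss_def by measurable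

lemma gauss_nonneg: "0 < s \<Longrightarrow> 0 \<le> gauss s w"
  unfolding gauss_def by simp

lemma gauss_scale:
  fixes u :: "'a::euclidean_space"
  assumes s: "0 < s"
  shows "gauss s (s *\<^sub>R u) = (1 / s ^ DIM('a)) * gauss 1 u"
proof -
  have "(norm (s *\<^sub>R u))\<^sup>2 / (2 * s\<^sup>2) = (norm u)\<^sup>2 / (2 * 1\<^sup>2)"
    using s by (simp add: power_mult_distrib field_simps)
  moreover have "(1 / (sqrt (2 * pi) * s)) ^ DIM('a) = (1 / s ^ DIM('a)) * (1 / (sqrt (2 * pi) * 1)) ^ DIM('a)"
    by (simp add: power_divide power_mult_distrib field_simps)
  ultimately show ?thesis unfolding gauss_def
    by (metis (no_types, lifting) minus_divide_left mult.assoc)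
qed

lemma gauss_odd:
  fixes c :: "'a::euclidean_space"
  shows "(\<integral>u. gauss 1 u * (u \<bullet> c) \<partial>lborel) = 0"
proof -
  let ?F = "\<lambda>u::'a. gauss 1 u * (u \<bullet> c)"
  have "(\<integral>u. ?F u \<partial>lborel) = (\<bar>-1::real\<bar>^DIM('a)) *\<^sub>R (\<integral>u. ?F (0 + (-1) *\<^sub>R u) \<partial>lborel)"
    by (rule integral_affine_eucl) simp
  also have "\<dots> = (\<integral>u. - ?F u \<partial>lborel)"
    by (simp add: gauss_def)
  also have "\<dots> = - (\<integral>u. ?F u \<partial>lborel)" by simp
  finally show ?thesis by simp
qed



lemma score_mult:
  fixes P :: "'a::euclidean_space \<Rightarrow> real"
  assumes Pnn: "\<forall>w. 0 \<le> P w"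
    and sc: "GDERIV (\<lambda>w. ln (P w)) z :> S"
    and dP: "GDERIV P z :> D"
  shows "P z *\<^sub>R S = D"
proof (cases "P z = 0")
  case True
  have "(\<lambda>h. h \<bullet> D) = (\<lambda>v. 0)"
    using dP unfolding gderiv_def
    by (intro differential_zero_maxmin[of z UNIV P]) (auto simp: True Pnn)
  then have "D \<bullet> D = 0" by metis
  then show ?thesis using True by simp
next
  case False
  then have pos: "0 < P z" using Pnn by (metis order_le_less)
  have "DERIV ln (P z) :> 1 / P z" using pos by (auto intro!: derivative_eq_intros)
  then have "GDERIV (\<lambda>w. ln (P w)) z :> (1 / P z) *\<^sub>R D"
    by (rule GDERIV_DERIV_compose[OF dP])
  then have "(\<lambda>h. h \<bullet> S) = (\<lambda>h. h \<bullet> ((1 / P z) *\<^sub>R D))"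
    using sc unfolding gderiv_def by (rule has_derivative_unique[rotated])
  then have "(S - (1 / P z) *\<^sub>R D) \<bullet> S = (S - (1 / P z) *\<^sub>R D) \<bullet> ((1 / P z) *\<^sub>R D)"
    by metis
  then have "(S - (1 / P z) *\<^sub>R D) \<bullet> (S - (1 / P z) *\<^sub>R D) = 0"
    by (simp add: inner_diff_right)
  then have "S = (1 / P z) *\<^sub>R D" by simp
  then show ?thesis using pos by simp
qed



lemma core:
  fixes Q P :: "'a::euclidean_space \<Rightarrow> real" and M h S :: "'a \<Rightarrow> 'a" and \<sigma> :: real
  assumes Qm[measurable]: "Q \<in> borel_measurable borel"
    and Qnn: "\<forall>y. 0 \<le> Q y"
    and Mm[measurable]: "M \<in> borel_measurable borel"
    and hm[measurable]: "h \<in> borel_measurable borel"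
    and sp: "0 < \<sigma>"
    and Pdef: "\<forall>z. P z = (\<integral>y. gauss \<sigma> (z - M y) * Q y \<partial>lborel)"
    and score: "\<forall>z. GDERIV (\<lambda>w. ln (P w)) z :> S z"
    and di: "\<forall>z. integrable lborel (\<lambda>y. (gauss \<sigma> (z - M y) * Q y) *\<^sub>R (- (1 / \<sigma>\<^sup>2) *\<^sub>R (z - M y)))
       \<and> GDERIV P z :> (\<integral>y. (gauss \<sigma> (z - M y) * Q y) *\<^sub>R (- (1 / \<sigma>\<^sup>2) *\<^sub>R (z - M y)) \<partial>lborel)"
    and intG: "integrable (lborel \<Otimes>\<^sub>M lborel)
       (\<lambda>yu. Q (fst yu) * gauss 1 (snd yu) * (snd yu \<bullet> h (M (fst yu) + \<sigma> *\<^sub>R snd yu)))"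
  shows "(\<integral>z. P z * (S z \<bullet> h z) \<partial>lborel)
     = - (1 / \<sigma>) * (\<integral>yu. Q (fst yu) * gauss 1 (snd yu) * (snd yu \<bullet> h (M (fst yu) + \<sigma> *\<^sub>R snd yu)) \<partial>(lborel \<Otimes>\<^sub>M lborel))"
proof -
  define G where "G y u = Q y * gauss 1 u * (u \<bullet> h (M y + \<sigma> *\<^sub>R u))" for y u
  define k where "k y z = gauss \<sigma> (z - M y) * Q y * (- (1 / \<sigma>\<^sup>2)) * ((z - M y) \<bullet> h z)" for y z
  define K where "K z y = (gauss \<sigma> (z - M y) * Q y) *\<^sub>R (- (1 / \<sigma>\<^sup>2) *\<^sub>R (z - M y))" for z y
  have Gm[measurable]: "(\<lambda>p. G (fst p) (snd p)) \<in> borel_measurable (lborel \<Otimes>\<^sub>M lborel)"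
    unfolding G_def by measurable
  have km[measurable]: "(\<lambda>p. k (fst p) (snd p)) \<in> borel_measurable (lborel \<Otimes>\<^sub>M lborel)"
    unfolding k_def by measurable
  have Pnn: "\<forall>w. 0 \<le> P w"
    using Pdef by (auto intro!: Bochner_Integration.integral_nonneg mult_nonneg_nonneg gauss_nonneg[OF sp] simp: Qnn)
  have ksub: "k y (M y + \<sigma> *\<^sub>R u) = - (1 / \<sigma> ^ DIM('a)) * (1 / \<sigma>) * G y u" for y u
    using sp unfolding k_def G_def by (simp add: gauss_scale power2_eq_square field_simps)
  have step1: "P z * (S z \<bullet> h z) = (\<integral>y. k y z \<partial>lborel)" for z
  proof -
    have "P z *\<^sub>R S z = (\<integral>y. K z y \<partial>lborel)"
      using score_mult[OF Pnn] score di unfolding K_def by blast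
    then have "P z * (S z \<bullet> h z) = (\<integral>y. K z y \<partial>lborel) \<bullet> h z"
      by (metis inner_scaleR_left)
    also have "\<dots> = (\<integral>y. K z y \<bullet> h z \<partial>lborel)"
    proof -
      have "integrable lborel (K z)" using di unfolding K_def by blast
      then show ?thesis by (rule integral_inner_left[symmetric])
    qed
    also have "\<dots> = (\<integral>y. k y z \<partial>lborel)"
      unfolding K_def k_def by (intro Bochner_Integration.integral_cong refl) (simp add: mult.assoc)
    finally show ?thesis .
  qed
  have inner_k: "(\<integral>z. k y z \<partial>lborel) = - (1 / \<sigma>) * (\<integral>u. G y u \<partial>lborel)" for y
  proof -
    have "(\<integral>z. k y z \<partial>lborel) = (\<bar>\<sigma>\<bar>^DIM('a)) *\<^sub>R (\<integral>u. k y (M y + \<sigma> *\<^sub>R u) \<partial>lborel)"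
      using sp by (intro integral_affine_eucl) simp
    also have "\<dots> = \<sigma>^DIM('a) * (\<integral>u. - (1 / \<sigma> ^ DIM('a)) * (1 / \<sigma>) * G y u \<partial>lborel)"
      using sp by (simp add: ksub)
    also have "\<dots> = - (1 / \<sigma>) * (\<integral>u. G y u \<partial>lborel)"
      using sp by simp
    finally show ?thesis .
  qed
  have nn_inner: "(\<integral>\<^sup>+z. ennreal (norm (k y z)) \<partial>lborel) = (\<integral>\<^sup>+u. ennreal (1 / \<sigma> * norm (G y u)) \<partial>lborel)" for y
  proof -
    have "(\<integral>\<^sup>+z. ennreal (norm (k y z)) \<partial>lborel)
        = ennreal (\<bar>\<sigma>\<bar>^DIM('a)) * (\<integral>\<^sup>+u. ennreal (norm (k y (M y + \<sigma> *\<^sub>R u))) \<partial>lborel)"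
      using sp by (intro nn_integral_affine_eucl) (auto simp: k_def)
    also have "\<dots> = (\<integral>\<^sup>+u. ennreal (\<bar>\<sigma>\<bar>^DIM('a)) * ennreal (norm (k y (M y + \<sigma> *\<^sub>R u))) \<partial>lborel)"
      by (intro nn_integral_cmult[symmetric]) (unfold k_def, measurable)
    also have "\<dots> = (\<integral>\<^sup>+u. ennreal (1 / \<sigma> * norm (G y u)) \<partial>lborel)"
    proof (intro nn_integral_cong)
      fix u
      have "\<bar>\<sigma>\<bar>^DIM('a) * norm (k y (M y + \<sigma> *\<^sub>R u)) = 1 / \<sigma> * norm (G y u)"
        using sp by (simp add: ksub abs_mult field_simps)
      then show "ennreal (\<bar>\<sigma>\<bar>^DIM('a)) * ennreal (norm (k y (M y + \<sigma> *\<^sub>R u))) = ennreal (1 / \<sigma> * norm (G y u))"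
        by (simp add: ennreal_mult[symmetric])
    qed
    finally show ?thesis .
  qed
  have intk: "integrable (lborel \<Otimes>\<^sub>M lborel) (\<lambda>p. k (fst p) (snd p))"
  proof -
    have "(\<integral>\<^sup>+p. ennreal (norm (k (fst p) (snd p))) \<partial>(lborel \<Otimes>\<^sub>M lborel))
        = (\<integral>\<^sup>+y. \<integral>\<^sup>+z. ennreal (norm (k y z)) \<partial>lborel \<partial>lborel)"
      by (subst lborel.nn_integral_fst[symmetric]) auto
    also have "\<dots> = (\<integral>\<^sup>+y. \<integral>\<^sup>+u. ennreal (1 / \<sigma> * norm (G y u)) \<partial>lborel \<partial>lborel)"
      by (rule nn_integral_cong) (rule nn_inner)
    also have "\<dots> = (\<integral>\<^sup>+p. ennreal (1 / \<sigma> * norm (G (fst p) (snd p))) \<partial>(lborel \<Otimes>\<^sub>M lborel))"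
      by (subst lborel.nn_integral_fst[symmetric]) auto
    also have "\<dots> = ennreal (1 / \<sigma>) * (\<integral>\<^sup>+p. ennreal (norm (G (fst p) (snd p))) \<partial>(lborel \<Otimes>\<^sub>M lborel))"
    proof -
      have "(\<integral>\<^sup>+p. ennreal (1 / \<sigma> * norm (G (fst p) (snd p))) \<partial>(lborel \<Otimes>\<^sub>M lborel))
          = (\<integral>\<^sup>+p. ennreal (1 / \<sigma>) * ennreal (norm (G (fst p) (snd p))) \<partial>(lborel \<Otimes>\<^sub>M lborel))"
        using sp by (intro nn_integral_cong) (simp add: ennreal_mult[symmetric])
      also have "\<dots> = ennreal (1 / \<sigma>) * (\<integral>\<^sup>+p. ennreal (norm (G (fst p) (snd p))) \<partial>(lborel \<Otimes>\<^sub>M lborel))"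
        by (rule nn_integral_cmult) measurable
      finally show ?thesis .
    qed
    also have "\<dots> < \<infinity>"
      using intG unfolding integrable_iff_bounded G_def by (simp add: ennreal_mult_less_top)
    finally show ?thesis unfolding integrable_iff_bounded by simp
  qed
  have "(\<integral>z. P z * (S z \<bullet> h z) \<partial>lborel) = (\<integral>z. \<integral>y. k y z \<partial>lborel \<partial>lborel)"
    by (simp add: step1)
  also have "\<dots> = (\<integral>y. \<integral>z. k y z \<partial>lborel \<partial>lborel)"
    using lborel_pair.Fubini_integral[of "\<lambda>y z. k y z"] intk by (simp add: case_prod_beta')
  also have "\<dots> = (\<integral>y. - (1 / \<sigma>) * (\<integral>u. G y u \<partial>lborel) \<partial>lborel)"
    by (simp add: inner_k)
  also have "\<dots> = - (1 / \<sigma>) * (\<integral>y. \<integral>u. G y u \<partial>lborel \<partial>lborel)"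
    by simp
  also have "(\<integral>y. \<integral>u. G y u \<partial>lborel \<partial>lborel) = (\<integral>p. G (fst p) (snd p) \<partial>(lborel \<Otimes>\<^sub>M lborel))"
    using lborel_pair.integral_fst'[of "\<lambda>p. G (fst p) (snd p)"] intG unfolding G_def by simp
  finally show ?thesis unfolding G_def by simp
qed

lemma sym0:
  fixes Q :: "'a::euclidean_space \<Rightarrow> real" and M h :: "'a \<Rightarrow> 'a"
  assumes int: "integrable (lborel \<Otimes>\<^sub>M lborel)
       (\<lambda>yu. Q (fst yu) * gauss 1 (snd yu) * (snd yu \<bullet> h (M (fst yu))))"
  shows "(\<integral>yu. Q (fst yu) * gauss 1 (snd yu) * (snd yu \<bullet> h (M (fst yu))) \<partial>(lborel \<Otimes>\<^sub>M lborel)) = 0"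
proof -
  have "(\<integral>yu. Q (fst yu) * gauss 1 (snd yu) * (snd yu \<bullet> h (M (fst yu))) \<partial>(lborel \<Otimes>\<^sub>M lborel))
      = (\<integral>y. \<integral>u. Q y * gauss 1 u * (u \<bullet> h (M y)) \<partial>lborel \<partial>lborel)"
    using lborel_pair.integral_fst'[OF int] by simp
  also have "\<dots> = (\<integral>y. Q y * (\<integral>u. gauss 1 u * (u \<bullet> h (M y)) \<partial>lborel) \<partial>lborel)"
    by (simp add: mult.assoc)
  also have "\<dots> = 0" by (simp add: gauss_odd)
  finally show ?thesis .
qed


lemma aux_final: "(a::real)+b = c+2*j1-2*j2 \<Longrightarrow> E + 1/2*(a/n)+1/2*(b/n) = E + 1/2*(c/n) + j1/n - j2/n"
proof -
  assume h: "a+b = c+2*j1-2*j2"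
  have "1/2*(a/n)+1/2*(b/n) = (a+b)/(2*n)" by (simp add: add_divide_distrib)
  also have "\<dots> = (c+2*j1-2*j2)/(2*n)" by (simp add: h)
  also have "\<dots> = 1/2*(c/n) + j1/n - j2/n" by (simp add: add_divide_distrib diff_divide_distrib)
  finally show ?thesis by simp
qed


theorem theorem1:
  fixes q0 :: "'a::euclidean_space \<Rightarrow> real"
    and f :: "'a \<Rightarrow> real \<Rightarrow> 'a" and g :: "real \<Rightarrow> real"
    and s :: "'a \<Rightarrow> real \<Rightarrow> 'a"
    and t :: "nat \<Rightarrow> real" and nf :: nat
    and sc :: "nat \<Rightarrow> 'a \<Rightarrow> 'a"
    and q :: "nat \<Rightarrow> 'a \<Rightarrow> real" and mu :: "nat \<Rightarrow> 'a \<Rightarrow> 'a" and sig :: "nat \<Rightarrow> real"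
  defines "q \<equiv> marg q0 f g t"
    and "mu \<equiv> em_mu f t"
    and "sig \<equiv> em_sigma g t"
  assumes nf_pos: "1 \<le> nf"
    and t0: "t 0 = 0"
    and t_incr: "\<forall>n < nf. t n < t (Suc n)"
    and sig_pos: "\<forall>n < nf. 0 < sig n"
    and q0_meas: "q0 \<in> borel_measurable lborel"
    and q0_nonneg: "\<forall>z. 0 \<le> q0 z"
    and q0_int: "integrable lborel q0"
    and q0_one: "(\<integral>z. q0 z \<partial>lborel) = 1"
    and f_meas: "\<forall>n \<le> nf. (\<lambda>z. f z (t n)) \<in> borel_measurable borel"
    and s_meas: "\<forall>n \<le> nf. (\<lambda>z. s z (t n)) \<in> borel_measurable borel"
    \<comment> \<open>sc n z is the score \<nabla>_z log q_n(z)\<close>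
    and score: "\<forall>n \<in> {1..nf}. \<forall>z. GDERIV (\<lambda>w. ln (q n w)) z :> sc n z"
    \<comment> \<open>differentiation under the integral sign in q_n = \<integral> q(z_n|z_{n-1}) q_{n-1}\<close>
    and diff_int: "\<forall>n \<in> {1..nf}. \<forall>z.
        integrable lborel (\<lambda>y. (gauss (sig (n - 1)) (z - mu (n - 1) y) * q (n - 1) y)
            *\<^sub>R (- (1 / (sig (n - 1))\<^sup>2) *\<^sub>R (z - mu (n - 1) y)))
      \<and> GDERIV (q n) z :> (\<integral>y. (gauss (sig (n - 1)) (z - mu (n - 1) y) * q (n - 1) y)
            *\<^sub>R (- (1 / (sig (n - 1))\<^sup>2) *\<^sub>R (z - mu (n - 1) y)) \<partial>lborel)"
    \<comment> \<open>finiteness of all expectations involved\<close>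
    and int_H: "integrable lborel (\<lambda>z. q nf z * ln (q nf z))"
    and int_1: "\<forall>n \<in> {1..nf}. integrable lborel
        (\<lambda>z. q n z * ((g (t n))\<^sup>2 * (norm (sc n z - s z (t n)))\<^sup>2))"
    and int_2: "\<forall>n \<in> {1..nf}. integrable lborel
        (\<lambda>z. q n z * ((2 *\<^sub>R f z (t n) - (g (t n))\<^sup>2 *\<^sub>R sc n z) \<bullet> sc n z))"
    and int_3: "\<forall>n \<in> {1..nf}. integrable lborel
        (\<lambda>z. q n z * ((g (t n))\<^sup>2 * (norm (s z (t n)))\<^sup>2))"
    and int_4: "\<forall>n \<in> {1..nf}. integrable lborel
        (\<lambda>z. q n z * (f z (t n) \<bullet> sc n z))"
    and int_5: "\<forall>n \<in> {1..nf}. integrable lborel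
        (\<lambda>z. q n z * ((g (t n))\<^sup>2 * (sc n z \<bullet> s z (t n))))"
    and int_6: "\<forall>n \<in> {1..nf}. integrable (lborel \<Otimes>\<^sub>M lborel)
        (\<lambda>yu. q (n - 1) (fst yu) * gauss 1 (snd yu)
           * (snd yu \<bullet> s (mu (n - 1) (fst yu) + sig (n - 1) *\<^sub>R snd yu) (t n)))"
    and int_7: "\<forall>n \<in> {1..nf}. integrable (lborel \<Otimes>\<^sub>M lborel)
        (\<lambda>yu. q (n - 1) (fst yu) * gauss 1 (snd yu)
           * (snd yu \<bullet> s (mu (n - 1) (fst yu)) (t n)))"
    and int_8: "\<forall>n \<in> {1..nf}. integrable (lborel \<Otimes>\<^sub>M lborel)
        (\<lambda>yu. q (n - 1) (fst yu) * gauss 1 (snd yu)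
           * (snd yu \<bullet> f (mu (n - 1) (fst yu) + sig (n - 1) *\<^sub>R snd yu) (t n)))"
    and int_9: "\<forall>n \<in> {1..nf}. integrable (lborel \<Otimes>\<^sub>M lborel)
        (\<lambda>yu. q (n - 1) (fst yu) * gauss 1 (snd yu)
           * (snd yu \<bullet> f (mu (n - 1) (fst yu)) (t n)))"
  shows
    "entropy (q nf)
       + 1/2 * EN nf q (\<lambda>n z. (g (t n))\<^sup>2 * (norm (sc n z - s z (t n)))\<^sup>2)
       + 1/2 * EN nf q (\<lambda>n z. (2 *\<^sub>R f z (t n) - (g (t n))\<^sup>2 *\<^sub>R sc n z) \<bullet> sc n z)
     = entropy (q nf)
       + 1/2 * EN nf q (\<lambda>n z. (g (t n))\<^sup>2 * (norm (s z (t n)))\<^sup>2)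
       + EJ nf q mu sig (\<lambda>n y u z. (g (t n))\<^sup>2
            * (((1 / sig (n - 1)) *\<^sub>R u) \<bullet> (s z (t n) - s (mu (n - 1) y) (t n))))
       - EJ nf q mu sig (\<lambda>n y u z.
            ((1 / sig (n - 1)) *\<^sub>R u) \<bullet> (f z (t n) - f (mu (n - 1) y) (t n)))"
  proof -
  have mum: "mu m \<in> borel_measurable borel" if "m \<le> nf" for m
  proof -
    have [measurable]: "(\<lambda>z. f z (t m)) \<in> borel_measurable borel" using f_meas that by blast
    show ?thesis unfolding mu_def em_mu_def by measurable
  qed
  have qSuc: "q (Suc m) z = (\<integral>y. gauss (sig m) (z - mu m y) * q m y \<partial>lborel)" for m z
    unfolding q_def mu_def sig_def by simp
  have qm: "q m \<in> borel_measurable borel" if "m \<le> nf" for m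
    using that
  proof (induction m)
    case 0
    then show ?case using q0_meas unfolding q_def by simp
  next
    case (Suc m)
    have [measurable]: "q m \<in> borel_measurable borel" "mu m \<in> borel_measurable borel"
      using Suc mum by auto
    have "(\<lambda>z. \<integral>y. gauss (sig m) (z - mu m y) * q m y \<partial>lborel) \<in> borel_measurable borel"
      by measurable
    then show ?case by (simp add: qSuc[abs_def])
  qed
  have qnn: "\<forall>z. 0 \<le> q m z" if "m \<le> nf" for m
    using that
  proof (induction m)
    case 0
    then show ?case using q0_nonneg unfolding q_def by simp
  next
    case (Suc m)
    have "0 < sig m" using sig_pos Suc by auto
    then show ?case using Suc
      by (auto simp: qSuc intro!: Bochner_Integration.integral_nonneg mult_nonneg_nonneg gauss_nonneg)
  qed
  define A where "A n = (\<integral>z. q n z * ((g (t n))\<^sup>2 * (norm (sc n z - s z (t n)))\<^sup>2) \<partial>lborel)" for n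
  define B where "B n = (\<integral>z. q n z * ((2 *\<^sub>R f z (t n) - (g (t n))\<^sup>2 *\<^sub>R sc n z) \<bullet> sc n z) \<partial>lborel)" for n
  define C where "C n = (\<integral>z. q n z * ((g (t n))\<^sup>2 * (norm (s z (t n)))\<^sup>2) \<partial>lborel)" for n
  define J1 where "J1 n = (\<integral>yu. q (n - 1) (fst yu) * gauss 1 (snd yu)
             * ((g (t n))\<^sup>2 * (((1 / sig (n - 1)) *\<^sub>R snd yu) \<bullet> (s (mu (n - 1) (fst yu) + sig (n - 1) *\<^sub>R snd yu) (t n) - s (mu (n - 1) (fst yu)) (t n))))
        \<partial>(lborel \<Otimes>\<^sub>M lborel))" for n
  define J2 where "J2 n = (\<integral>yu. q (n - 1) (fst yu) * gauss 1 (snd yu)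
             * (((1 / sig (n - 1)) *\<^sub>R snd yu) \<bullet> (f (mu (n - 1) (fst yu) + sig (n - 1) *\<^sub>R snd yu) (t n) - f (mu (n - 1) (fst yu)) (t n)))
        \<partial>(lborel \<Otimes>\<^sub>M lborel))" for n
  have pern: "A n + B n = C n + 2 * J1 n - 2 * J2 n" if n: "n \<in> {1..nf}" for n
  proof -
    obtain m where nm: "n = Suc m" using n by (cases n) auto
    have mn: "m < nf" using n nm by auto
    have m1: "n - 1 = m" using nm by simp
    have sp: "0 < sig m" using sig_pos mn by auto
    have Qm: "q m \<in> borel_measurable borel" using qm mn by simp
    have Qnn: "\<forall>y. 0 \<le> q m y" using qnn mn by simp
    have Mm: "mu m \<in> borel_measurable borel" using mum mn by simp
    have fm: "(\<lambda>z. f z (t n)) \<in> borel_measurable borel" using f_meas n by auto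
    have sm: "(\<lambda>z. s z (t n)) \<in> borel_measurable borel" using s_meas n by auto
    have Pdef: "\<forall>z. q n z = (\<integral>y. gauss (sig m) (z - mu m y) * q m y \<partial>lborel)"
      using qSuc nm by simp
    have sc': "\<forall>z. GDERIV (\<lambda>w. ln (q n w)) z :> sc n z" using score n by blast
    have di': "\<forall>z. integrable lborel (\<lambda>y. (gauss (sig m) (z - mu m y) * q m y) *\<^sub>R (- (1 / (sig m)\<^sup>2) *\<^sub>R (z - mu m y)))
       \<and> GDERIV (q n) z :> (\<integral>y. (gauss (sig m) (z - mu m y) * q m y) *\<^sub>R (- (1 / (sig m)\<^sup>2) *\<^sub>R (z - mu m y)) \<partial>lborel)"
      using diff_int n m1 by auto
    define Gs where "Gs yu = q m (fst yu) * gauss 1 (snd yu) * (snd yu \<bullet> s (mu m (fst yu) + sig m *\<^sub>R snd yu) (t n))" for yu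
    define Gs0 where "Gs0 yu = q m (fst yu) * gauss 1 (snd yu) * (snd yu \<bullet> s (mu m (fst yu)) (t n))" for yu
    define Gf where "Gf yu = q m (fst yu) * gauss 1 (snd yu) * (snd yu \<bullet> f (mu m (fst yu) + sig m *\<^sub>R snd yu) (t n))" for yu
    define Gf0 where "Gf0 yu = q m (fst yu) * gauss 1 (snd yu) * (snd yu \<bullet> f (mu m (fst yu)) (t n))" for yu
    have iGs: "integrable (lborel \<Otimes>\<^sub>M lborel) Gs" using int_6 n m1 unfolding Gs_def by auto
    have iGs0: "integrable (lborel \<Otimes>\<^sub>M lborel) Gs0" using int_7 n m1 unfolding Gs0_def by auto
    have iGf: "integrable (lborel \<Otimes>\<^sub>M lborel) Gf" using int_8 n m1 unfolding Gf_def by auto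
    have iGf0: "integrable (lborel \<Otimes>\<^sub>M lborel) Gf0" using int_9 n m1 unfolding Gf0_def by auto
    have I4: "(\<integral>z. q n z * (sc n z \<bullet> f z (t n)) \<partial>lborel) = - (1 / sig m) * integral\<^sup>L (lborel \<Otimes>\<^sub>M lborel) Gf"
      unfolding Gf_def
      by (rule core[OF Qm Qnn Mm fm sp Pdef sc' di']) (use iGf in \<open>simp add: Gf_def[abs_def]\<close>)
    have I5: "(\<integral>z. q n z * (sc n z \<bullet> s z (t n)) \<partial>lborel) = - (1 / sig m) * integral\<^sup>L (lborel \<Otimes>\<^sub>M lborel) Gs"
      unfolding Gs_def
      by (rule core[OF Qm Qnn Mm sm sp Pdef sc' di']) (use iGs in \<open>simp add: Gs_def[abs_def]\<close>)
    have Z1: "integral\<^sup>L (lborel \<Otimes>\<^sub>M lborel) Gs0 = 0"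
      unfolding Gs0_def by (rule sym0) (use iGs0 in \<open>simp add: Gs0_def[abs_def]\<close>)
    have Z2: "integral\<^sup>L (lborel \<Otimes>\<^sub>M lborel) Gf0 = 0"
      unfolding Gf0_def by (rule sym0) (use iGf0 in \<open>simp add: Gf0_def[abs_def]\<close>)
    have J1e: "J1 n = (g (t n))\<^sup>2 / sig m * integral\<^sup>L (lborel \<Otimes>\<^sub>M lborel) Gs"
    proof -
      have "J1 n = (\<integral>yu. (g (t n))\<^sup>2 / sig m * Gs yu - (g (t n))\<^sup>2 / sig m * Gs0 yu \<partial>(lborel \<Otimes>\<^sub>M lborel))"
        unfolding J1_def m1 Gs_def Gs0_def
        by (intro Bochner_Integration.integral_cong refl) (simp add: inner_diff_right algebra_simps)
      also have "\<dots> = (g (t n))\<^sup>2 / sig m * integral\<^sup>L (lborel \<Otimes>\<^sub>M lborel) Gs - (g (t n))\<^sup>2 / sig m * integral\<^sup>L (lborel \<Otimes>\<^sub>M lborel) Gs0"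
        using iGs iGs0 by simp
      finally show ?thesis using Z1 by simp
    qed
    have J2e: "J2 n = 1 / sig m * integral\<^sup>L (lborel \<Otimes>\<^sub>M lborel) Gf"
    proof -
      have "J2 n = (\<integral>yu. 1 / sig m * Gf yu - 1 / sig m * Gf0 yu \<partial>(lborel \<Otimes>\<^sub>M lborel))"
        unfolding J2_def m1 Gf_def Gf0_def
        by (intro Bochner_Integration.integral_cong refl) (simp add: inner_diff_right algebra_simps)
      also have "\<dots> = 1 / sig m * integral\<^sup>L (lborel \<Otimes>\<^sub>M lborel) Gf - 1 / sig m * integral\<^sup>L (lborel \<Otimes>\<^sub>M lborel) Gf0"
        using iGf iGf0 by simp
      finally show ?thesis using Z2 by simp
    qed
    have i1: "integrable lborel (\<lambda>z. q n z * ((g (t n))\<^sup>2 * (norm (sc n z - s z (t n)))\<^sup>2))" using int_1 n by blast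
    have i2: "integrable lborel (\<lambda>z. q n z * ((2 *\<^sub>R f z (t n) - (g (t n))\<^sup>2 *\<^sub>R sc n z) \<bullet> sc n z))" using int_2 n by blast
    have i3: "integrable lborel (\<lambda>z. q n z * ((g (t n))\<^sup>2 * (norm (s z (t n)))\<^sup>2))" using int_3 n by blast
    have i4: "integrable lborel (\<lambda>z. q n z * (f z (t n) \<bullet> sc n z))" using int_4 n by blast
    have i5: "integrable lborel (\<lambda>z. q n z * ((g (t n))\<^sup>2 * (sc n z \<bullet> s z (t n))))" using int_5 n by blast
    have "A n + B n = (\<integral>z. q n z * ((g (t n))\<^sup>2 * (norm (sc n z - s z (t n)))\<^sup>2)
                 + q n z * ((2 *\<^sub>R f z (t n) - (g (t n))\<^sup>2 *\<^sub>R sc n z) \<bullet> sc n z) \<partial>lborel)"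
      unfolding A_def B_def using i1 i2 by simp
    also have "\<dots> = (\<integral>z. q n z * ((g (t n))\<^sup>2 * (norm (s z (t n)))\<^sup>2)
                 + 2 * (q n z * (f z (t n) \<bullet> sc n z)) - 2 * (q n z * ((g (t n))\<^sup>2 * (sc n z \<bullet> s z (t n)))) \<partial>lborel)"
    proof (intro Bochner_Integration.integral_cong refl)
      fix z
      have e1: "(norm (sc n z - s z (t n)))\<^sup>2 = (norm (sc n z))\<^sup>2 - 2 * (sc n z \<bullet> s z (t n)) + (norm (s z (t n)))\<^sup>2"
        by (simp add: power2_norm_eq_inner inner_diff_left inner_diff_right inner_commute)
      have e2: "(2 *\<^sub>R f z (t n) - (g (t n))\<^sup>2 *\<^sub>R sc n z) \<bullet> sc n z
          = 2 * (f z (t n) \<bullet> sc n z) - (g (t n))\<^sup>2 * (norm (sc n z))\<^sup>2"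
        by (simp add: power2_norm_eq_inner inner_diff_left)
      show "q n z * ((g (t n))\<^sup>2 * (norm (sc n z - s z (t n)))\<^sup>2)
                 + q n z * ((2 *\<^sub>R f z (t n) - (g (t n))\<^sup>2 *\<^sub>R sc n z) \<bullet> sc n z)
           = q n z * ((g (t n))\<^sup>2 * (norm (s z (t n)))\<^sup>2)
                 + 2 * (q n z * (f z (t n) \<bullet> sc n z)) - 2 * (q n z * ((g (t n))\<^sup>2 * (sc n z \<bullet> s z (t n))))"
        by (simp only: e1 e2) (simp add: algebra_simps)
    qed
    also have "\<dots> = C n + 2 * (\<integral>z. q n z * (f z (t n) \<bullet> sc n z) \<partial>lborel)
                 - 2 * (\<integral>z. q n z * ((g (t n))\<^sup>2 * (sc n z \<bullet> s z (t n))) \<partial>lborel)"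
      unfolding C_def using i3 i4 i5 by simp
    also have "(\<integral>z. q n z * (f z (t n) \<bullet> sc n z) \<partial>lborel) = - (1 / sig m) * integral\<^sup>L (lborel \<Otimes>\<^sub>M lborel) Gf"
      using I4 by (simp add: inner_commute)
    also have "(\<integral>z. q n z * ((g (t n))\<^sup>2 * (sc n z \<bullet> s z (t n))) \<partial>lborel)
        = (g (t n))\<^sup>2 * (- (1 / sig m) * integral\<^sup>L (lborel \<Otimes>\<^sub>M lborel) Gs)"
      using I5 by (simp add: mult.left_commute[of "q n _"])
    finally show ?thesis using J1e J2e by (simp add: algebra_simps)
  qed
  have S: "(\<Sum>n = 1..nf. A n) + (\<Sum>n = 1..nf. B n) = (\<Sum>n = 1..nf. C n) + 2 * (\<Sum>n = 1..nf. J1 n) - 2 * (\<Sum>n = 1..nf. J2 n)"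
    using pern by (simp add: sum.distrib[symmetric] sum_subtractf[symmetric] sum_distrib_left)
  have nfp: "0 < real nf" using nf_pos by simp
  have eA: "EN nf q (\<lambda>n z. (g (t n))\<^sup>2 * (norm (sc n z - s z (t n)))\<^sup>2) = (\<Sum>n = 1..nf. A n) / real nf"
    unfolding EN_def A_def by (rule refl)
  have eB: "EN nf q (\<lambda>n z. (2 *\<^sub>R f z (t n) - (g (t n))\<^sup>2 *\<^sub>R sc n z) \<bullet> sc n z) = (\<Sum>n = 1..nf. B n) / real nf"
    unfolding EN_def B_def by (rule refl)
  have eC: "EN nf q (\<lambda>n z. (g (t n))\<^sup>2 * (norm (s z (t n)))\<^sup>2) = (\<Sum>n = 1..nf. C n) / real nf"
    unfolding EN_def C_def by (rule refl)
  have eJ1: "EJ nf q mu sig (\<lambda>n y u z. (g (t n))\<^sup>2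
            * (((1 / sig (n - 1)) *\<^sub>R u) \<bullet> (s z (t n) - s (mu (n - 1) y) (t n)))) = (\<Sum>n = 1..nf. J1 n) / real nf"
    unfolding EJ_def J1_def by (rule refl)
  have eJ2: "EJ nf q mu sig (\<lambda>n y u z.
            ((1 / sig (n - 1)) *\<^sub>R u) \<bullet> (f z (t n) - f (mu (n - 1) y) (t n))) = (\<Sum>n = 1..nf. J2 n) / real nf"
    unfolding EJ_def J2_def by (rule refl)
  show ?thesis
    unfolding eA eB eC eJ1 eJ2 by (rule aux_final[OF S])
qed
end
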